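(* Fix $b>0$ and $\Delta>0$. For each $\sigma_\theta^2>0$, let $a^\dagger(\sigma_\theta^2)$ be the unique maximizer over $a<\frac{4b^2\Delta}{\sigma_\theta^2}$ of $$E_1(a)=\begin{cases}\dfrac{b-\sqrt{\tfrac{b^2-\Delta a+\sqrt{(b^2-\Delta a)^2+\sigma_\theta^2a^2}}{2}}}{a}, & a\neq0,\\[1ex] \dfrac{\Delta}{2b}, & a=0.\end{cases}$$ Then there exist unique thresholds $0<\sigma_1^2<\Delta^2<\sigma_2^2$ such that $a^\dagger$ is increasing in $\sigma_\theta^2$ on $(0,\sigma_1^2)$, decreasing on $(\sigma_1^2,\sigma_2^2)$, and increasing on $(\sigma_2^2,\infty)$. Moreover, $\lim_{\sigma_\theta^2\downarrow0}a^\dagger=\frac{b^2}{\Delta}$ and $a^\dagger\to0$ from below as $\sigma_\theta^2\to\infty$. *)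

theory Defs
  imports "HOL-Analysis.Analysis"
begin

text \<open>E_1(a) for parameters b, Delta and variance s = sigma_theta^2.\<close>
definition E1 :: "real \<Rightarrow> real \<Rightarrow> real \<Rightarrow> real \<Rightarrow> real" where
  "E1 b \<Delta> s a =
     (if a = 0 then \<Delta> / (2 * b)
      else (b - sqrt ((b\<^sup>2 - \<Delta> * a + sqrt ((b\<^sup>2 - \<Delta> * a)\<^sup>2 + s * a\<^sup>2)) / 2)) / a)"

definition is_max_E1 :: "real \<Rightarrow> real \<Rightarrow> real \<Rightarrow> real \<Rightarrow> bool" where
  "is_max_E1 b \<Delta> s a \<longleftrightarrow>
     a < 4 * b\<^sup>2 * \<Delta> / s \<and> (\<forall>a'. a' < 4 * b\<^sup>2 * \<Delta> / s \<longrightarrow> E1 b \<Delta> s a' \<le> E1 b \<Delta> s a)"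

definition adagger :: "real \<Rightarrow> real \<Rightarrow> real \<Rightarrow> real" where
  "adagger b \<Delta> s = (THE a. is_max_E1 b \<Delta> s a)"

end

theory Submission
  imports Defs
begin
definition qq :: "real \<Rightarrow> real" where "qq z = 1 + z - z^2"
definition TT :: "real \<Rightarrow> real" where "TT z = (1-z)^3*(1+z)/(qq z)^2"
definition mm :: "real \<Rightarrow> real" where "mm z = 2*qq z/(1+z)"
definition xs :: "real \<Rightarrow> real" where "xs z = z * mm z"
definition z0 :: real where "z0 = (1 - sqrt 5)/2"

lemma z0_bounds: "-0.62 < z0 \<and> z0 < -0.61"
proof -
  have "2.22 < sqrt 5" by (rule real_less_rsqrt) (simp add: power2_eq_square)
  moreover have "sqrt 5 < 2.24" by (rule real_less_lsqrt) (auto simp: power2_eq_square)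
  ultimately show ?thesis unfolding z0_def by auto
qed

lemma range_pos:
  assumes "z0 < z" "z < 1"
  shows "qq z > 0" "1 + z > 0"
proof -
  have s5: "sqrt 5 ^ 2 = 5" by simp
  have "qq z = (z - z0) * ((1 + sqrt 5)/2 - z)"
    unfolding qq_def z0_def using s5 by (simp add: algebra_simps power2_eq_square add_divide_distrib[symmetric])
  moreover have "sqrt 5 > 1" by simp
  moreover have "(1 + sqrt 5)/2 > 1" using \<open>sqrt 5 > 1\<close> by simp
  moreover have "(1 + sqrt 5)/2 - z > 0" using calculation assms by linarith
  ultimately show "qq z > 0" using assms by (auto intro!: mult_pos_pos)
  have "z0 > -1" using z0_bounds by simp
  then show "1 + z > 0" using assms by linarith
qed

lemma poly_id:
  fixes m z x :: real
  assumes "m * (1 + z) = 2 * (1 + z - z^2)"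
  shows "(1+z)*(m-x)^2*((m-x)^2 - m^2*(1-x)) - m^2*x^2*(1-z)^3 = (1+z)*x*(x-z*m)^2*(x - (4-m-2*z)*m)"
  using assms by algebra


lemma basics:
  assumes "z0 < z" "z < 1"
  shows "qq z > 0" "1 + z > 0" "mm z > 0" "TT z > 0"
    "mm z * (1 + z) = 2 * (1 + z - z^2)"
    "TT z * (mm z)^2 * (1 + z) = 4 * (1 - z)^3"
proof -
  show q: "qq z > 0" "1 + z > 0" using range_pos assms by auto
  then show "mm z > 0" unfolding mm_def by simp
  show "TT z > 0" using q assms unfolding TT_def by simp
  show "mm z * (1 + z) = 2 * (1 + z - z^2)" using q unfolding mm_def qq_def by simp
  show "TT z * (mm z)^2 * (1 + z) = 4 * (1 - z)^3" using q unfolding mm_def TT_def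
    by (simp add: power_divide power_mult_distrib field_simps) algebra
qed

lemma ID:
  fixes m z t x v r :: real
  assumes hm: "m * (1 + z) = 2 * (1 + z - z^2)" and ht: "t * m^2 * (1 + z) = 4 * (1 - z)^3"
    and m: "m > 0" and z: "1 + z > 0"
    and v: "v = 1 - x/m" and r: "r = (4 - m - 2*z) * m"
  shows "v^2 * (v^2 - (1 - x)) - t * x^2 / 4 = x * (x - z*m)^2 * (x - r) / m^4"
proof -
  have mv: "m * v = m - x" using v m by (simp add: field_simps)
  have "(1+z)*m^4*(v^2 * (v^2 - (1 - x)) - t * x^2 / 4) = (1+z)*x*(x-z*m)^2*(x - r)"
  proof -
    have "(1+z)*m^4*(v^2 * (v^2 - (1 - x)) - t * x^2 / 4)
        = (1 + z) * (m * v)^2 * ((m * v)^2 - m^2 * (1 - x)) - (t * m^2 * (1 + z)) * m^2 * x^2 / 4"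
      by (simp add: algebra_simps power2_eq_square power4_eq_xxxx)
    also have "... = (1+z)*(m-x)^2*((m-x)^2 - m^2*(1-x)) - m^2*x^2*(1-z)^3"
      unfolding mv ht by simp
    also have "... = (1+z)*x*(x-z*m)^2*(x - r)"
      unfolding r using poly_id[OF hm] .
    finally show ?thesis .
  qed
  then have "v^2 * (v^2 - (1 - x)) - t * x^2 / 4 = ((1+z)*x*(x-z*m)^2*(x - r)) / ((1+z)*m^4)"
    using m z by (simp add: eq_divide_eq ac_simps)
  then show ?thesis using m z by simp
qed


lemma E11: "E1 1 1 t x = (if x = 0 then 1/2 else (1 - sqrt ((1 - x + sqrt ((1 - x)^2 + t * x^2)) / 2)) / x)"
  unfolding E1_def by simp

lemma core:
  assumes z: "z0 < z" "z < 1" and t: "t = TT z"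
  shows "E1 1 1 t x \<le> 1 / mm z \<and> (E1 1 1 t x = 1 / mm z \<longleftrightarrow> x = xs z)"
proof -
  define m where "m = mm z"
  define r where "r = (4 - m - 2*z) * m"
  define v where "v = 1 - x/m"
  note B = basics[OF z]
  have m: "m > 0" using B m_def by simp
  have zp: "1 + z > 0" using B by simp
  have tp: "t > 0" using B t by simp
  have hm: "m * (1 + z) = 2 * (1 + z - z^2)" using B m_def by simp
  have ht: "t * m^2 * (1 + z) = 4 * (1 - z)^3" using B m_def t by simp
  have id: "v^2 * (v^2 - (1 - x)) - t * x^2 / 4 = x * (x - z*m)^2 * (x - r) / m^4"
    by (rule ID[OF hm ht m zp v_def r_def])
  have xsm: "xs z = z * m" unfolding xs_def m_def by simp
  have "m * (1 + z) \<le> (3 - 2*z) * (1 + z)" using hm z by (simp add: algebra_simps power2_eq_square)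
  then have "m \<le> 3 - 2*z" using zp by simp
  then have "4 - m - 2*z \<ge> 1" by simp
  then have rm: "r \<ge> m" unfolding r_def using m mult_right_mono[of 1 "4 - m - 2*z" m] by simp
  show ?thesis
  proof (cases "x = 0")
    case True
    have q: "1 + z - z^2 > 0" using B unfolding qq_def by simp
    have "1 / m = (1 + z) / (2 * (1 + z - z^2))" using hm zp m q by (simp add: field_simps)
    moreover note q
    ultimately have "1/m \<ge> 1/2 \<and> (1/m = 1/2 \<longleftrightarrow> z = 0)"
    proof -
      assume e: "1 / m = (1 + z) / (2 * (1 + z - z^2))" and q: "1 + z - z^2 > 0"
      have "1/m - 1/2 = z^2 / (2 * (1 + z - z^2))" unfolding e using q
        by (simp add: field_simps)
      moreover have "z^2 / (2 * (1 + z - z^2)) \<ge> 0" using q by simp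
      moreover have "z^2 / (2 * (1 + z - z^2)) = 0 \<longleftrightarrow> z = 0" using q by simp
      ultimately show ?thesis by linarith
    qed
    moreover have "xs z = 0 \<longleftrightarrow> z = 0" using xsm m by simp
    ultimately show ?thesis using True unfolding E11 m_def by auto
  next
    case x0: False
    define u where "u = 1 - x"
    define S where "S = sqrt (u^2 + t * x^2)"
    define P where "P = (u + S) / 2"
    define p where "p = sqrt P"
    have E: "E1 1 1 t x = (1 - p) / x" using x0 unfolding E11 p_def P_def S_def u_def by simp
    have "u^2 < u^2 + t * x^2" using tp x0 by simp
    then have "sqrt (u^2) < S" unfolding S_def by (rule real_sqrt_less_mono)
    then have Su: "\<bar>u\<bar> < S" by simp
    have S2: "S^2 = u^2 + t * x^2" unfolding S_def using tp
      by (simp add: add_nonneg_nonneg)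
    have Pp: "P > 0" "P - u > 0" using Su unfolding P_def by auto
    have PP: "P * (P - u) = t * x^2 / 4" unfolding P_def using S2
      by (simp add: field_simps power2_eq_square)
    have p2: "p^2 = P" "p > 0" unfolding p_def using Pp by auto
    have G: "\<And>Y. Y * (Y - u) - P * (P - u) = (Y - P) * (Y + P - u)"
      by (simp add: algebra_simps)
    have idu: "v^2 * (v^2 - u) - P * (P - u) = x * (x - z*m)^2 * (x - r) / m^4"
      using id PP u_def by simp
    show ?thesis
    proof (cases "x = xs z")
      case True
      have v: "v = 1 - z" unfolding v_def True xsm using m by simp
      have vp: "v > 0" using v z by simp
      have "x * (x - z*m)^2 * (x - r) / m^4 = 0" using True xsm by simp
      then have vv: "v^2 * (v^2 - u) = t * x^2 / 4" using id unfolding u_def by linarith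
      have "v^2 - u \<ge> 0"
      proof (rule ccontr)
        assume "\<not> v^2 - u \<ge> 0"
        then have "v^2 * (v^2 - u) < 0" using vp by (simp add: mult_pos_neg)
        moreover have "t * x^2 / 4 \<ge> 0" using tp by simp
        ultimately show False using vv by linarith
      qed
      moreover have "v^2 \<ge> 0" by simp
      ultimately have nn: "2 * v^2 - u \<ge> 0" by linarith
      have e2: "(2 * v^2 - u)^2 = u^2 + t * x^2" using vv
        by (simp add: algebra_simps power2_eq_square)
      have "S = sqrt ((2 * v^2 - u)^2)" unfolding S_def e2 ..
      then have "S = 2 * v^2 - u" using nn by simp
      then have "P = v^2" unfolding P_def by simp
      then have "p = v" unfolding p_def using vp by simp
      then have "E1 1 1 t x = z / (z * m)" using E v True xsm by simp
      moreover have "z \<noteq> 0" using x0 True xsm by auto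
      ultimately have "E1 1 1 t x = 1 / m" using m by simp
      then show ?thesis using True m_def by simp
    next
      case nx: False
      have sq: "(x - z*m)^2 > 0" using nx xsm by simp
      have "E1 1 1 t x < 1 / m"
      proof (cases "x > 0")
        case xp: True
        show ?thesis
        proof (cases "x \<ge> m")
          case True
          have "(1 - p) / x < 1 / x" using p2 xp by (simp add: divide_strict_right_mono)
          also have "... \<le> 1 / m" using True m by (simp add: frac_le)
          finally show ?thesis using E by simp
        next
          case False
          have vp: "v > 0" unfolding v_def using False m by simp
          have "p > v"
          proof (rule ccontr)
            assume "\<not> p > v"
            then have "p \<le> v" by simp
            then have "p^2 \<le> v^2" using p2(2) by (intro power_mono) auto
            then have "(v^2 - P) * (v^2 + P - u) \<ge> 0" using p2 Pp by simp
            then have "x * (x - z*m)^2 * (x - r) / m^4 \<ge> 0" using idu G[of "v^2"] by simp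
            moreover have "x * (x - z*m)^2 * (x - r) < 0" using xp sq False rm
              by (simp add: mult_pos_neg)
            ultimately show False using m divide_neg_pos[of "x * (x - z*m)^2 * (x - r)" "m^4"] by simp
          qed
          then have "1 - p < x / m" unfolding v_def by simp
          then have "(1 - p) / x < (x / m) / x" using xp by (rule divide_strict_right_mono)
          moreover have "(x / m) / x = 1 / m" using xp by simp
          ultimately show ?thesis using E by simp
        qed
      next
        case False
        then have xn: "x < 0" using x0 by simp
        have "p < v"
        proof (rule ccontr)
          assume "\<not> p < v"
          then have "v \<le> p" by simp
          moreover have "v > 0" unfolding v_def using xn m by (simp add: field_simps)
          ultimately have "v^2 \<le> p^2" by (intro power_mono) auto
          then have a1: "P - v^2 \<ge> 0" using p2 by simp
          have a2: "P + v^2 - u \<ge> 0" using Pp zero_le_power2[of v] by linarith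
          have "(P - v^2) * (P + v^2 - u) \<ge> 0" using a1 a2 by simp
          then have "x * (x - z*m)^2 * (x - r) / m^4 \<le> 0" using idu G[of "v^2"]
            by (simp add: algebra_simps)
          moreover have "x * (x - z*m)^2 * (x - r) > 0"
          proof -
            have "x * (x - r) > 0" using xn rm m by (intro mult_neg_neg) auto
            then have "(x * (x - r)) * (x - z*m)^2 > 0" using sq by simp
            then show ?thesis by (simp add: ac_simps)
          qed
          moreover have "m^4 > 0" using m by simp
          ultimately show False using divide_pos_pos[of "x * (x - z*m)^2 * (x - r)" "m^4"] by linarith
        qed
        then have "1 - p > x / m" unfolding v_def by simp
        then have "(1 - p) / x < (x / m) / x" using xn by (rule divide_strict_right_mono_neg)
        moreover have "(x / m) / x = 1 / m" using xn by simp
        ultimately show ?thesis using E by simp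
      qed
      then show ?thesis using nx m_def by simp
    qed
  qed
qed


lemma xs_lt:
  assumes z: "z0 < z" "z < 1"
  shows "xs z < 4 / TT z"
proof -
  note B = basics[OF z]
  show ?thesis
  proof (cases "z \<le> 0")
    case True
    then have "xs z \<le> 0" unfolding xs_def using B by (simp add: mult_nonpos_nonneg)
    then show ?thesis using B by (smt (verit) divide_pos_pos)
  next
    case False
    have nz: "(1 + z) * qq z \<noteq> 0" using B by simp
    have "xs z * TT z = (z * (2 * qq z) * ((1-z)^3*(1+z))) / ((1+z) * (qq z)^2)"
      unfolding xs_def mm_def TT_def by simp
    also have "... = (2*z*(1-z)^3) * ((1+z) * qq z) / (qq z * ((1+z) * qq z))"
      by (simp add: power2_eq_square ac_simps)
    also have "... = 2*z*(1-z)^3 / qq z" using nz by (rule mult_divide_mult_cancel_right)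
    finally have e: "xs z * TT z = 2 * z * (1 - z)^3 / qq z" .
    have q1: "qq z \<ge> 1" using False z unfolding qq_def by (simp add: power2_eq_square)
    have "(1 - z)^3 \<le> 1" using False z by (simp add: power_le_one)
    then have "z * (1 - z)^3 \<le> 1" using False z by (simp add: mult_le_one)
    have nn: "0 \<le> 2 * z * (1 - z)^3" using False z by simp
    have "2 * z * (1 - z)^3 * 1 \<le> 2 * z * (1 - z)^3 * qq z" by (rule mult_left_mono[OF q1 nn])
    then have "2 * z * (1 - z)^3 / qq z \<le> 2 * z * (1 - z)^3" using q1
      by (simp add: divide_le_eq)
    then have "xs z * TT z < 4" using e \<open>z * (1 - z)^3 \<le> 1\<close> by linarith
    then show ?thesis using B by (simp add: less_divide_eq)
  qed
qed

lemma max_char: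
  assumes z: "z0 < z" "z < 1" and t: "t = TT z"
  shows "is_max_E1 1 1 t a \<longleftrightarrow> a = xs z"
proof
  assume "is_max_E1 1 1 t a"
  then have "E1 1 1 t (xs z) \<le> E1 1 1 t a" unfolding is_max_E1_def using xs_lt[OF z] t by simp
  moreover have "E1 1 1 t (xs z) = 1 / mm z" using core[OF z t, of "xs z"] by simp
  moreover have "E1 1 1 t a \<le> 1 / mm z" "E1 1 1 t a = 1 / mm z \<Longrightarrow> a = xs z"
    using core[OF z t, of a] by auto
  ultimately show "a = xs z" by linarith
next
  assume "a = xs z"
  moreover have "E1 1 1 t (xs z) = 1 / mm z" using core[OF z t, of "xs z"] by simp
  moreover have "\<forall>a'. E1 1 1 t a' \<le> 1 / mm z" using core[OF z t] by blast
  ultimately show "is_max_E1 1 1 t a" unfolding is_max_E1_def using xs_lt[OF z] t by simp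
qed

lemma TT_exists:
  assumes "t > 0"
  shows "\<exists>z. z0 < z \<and> z < 1 \<and> TT z = t"
proof -
  define F where "F z = t * (1 + z - z^2)^2 - (1 - z)^3 * (1 + z)" for z
  have qz0: "1 + z0 - z0^2 = 0" unfolding z0_def by (simp add: power2_eq_square field_simps)
  have zb: "-0.62 < z0 \<and> z0 < -0.61" by (rule z0_bounds)
  have "F z0 < 0" unfolding F_def qz0 using zb by (simp add: power3_eq_cube)
  moreover have "F 1 > 0" unfolding F_def using assms by simp
  moreover have "continuous_on {z0..1} F" unfolding F_def by (intro continuous_intros)
  ultimately obtain z where z: "z0 \<le> z" "z \<le> 1" "F z = 0"
    using IVT'[of F z0 0 1] zb by force
  have "z \<noteq> z0" using z \<open>F z0 < 0\<close> by auto
  moreover have "z \<noteq> 1" using z \<open>F 1 > 0\<close> by auto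
  ultimately have zz: "z0 < z" "z < 1" using z by auto
  have "qq z > 0" using basics[OF zz] by simp
  then have "TT z = t" using z(3) unfolding F_def TT_def qq_def by (simp add: field_simps)
  then show ?thesis using zz by blast
qed

lemma TT_deriv:
  assumes "qq z \<noteq> 0"
  shows "(TT has_real_derivative (- ((1 - z)^2 * (4 + 2 * z) / (qq z)^3))) (at z)"
proof -
  have e: "TT = (\<lambda>w. ((1-w)^3*(1+w)) / ((1+w-w^2)^2))" unfolding TT_def[abs_def] qq_def by simp
  have dN: "((\<lambda>w. (1-w)^3*(1+w)) has_real_derivative (- ((1-z)^2*(2+4*z)))) (at z)"
    by (rule DERIV_cong, (rule derivative_eq_intros refl)+) (simp add: algebra_simps power2_eq_square power3_eq_cube)
  have dQ: "((\<lambda>w. (1+w-w^2)^2) has_real_derivative (2*(1+z-z^2)*(1-2*z))) (at z)"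
    by (rule DERIV_cong, (rule derivative_eq_intros refl)+) (simp add: algebra_simps power2_eq_square)
  have q: "1 + z - z^2 \<noteq> 0" using assms unfolding qq_def .
  have d: "(TT has_real_derivative
      ((- ((1-z)^2*(2+4*z))) * (1+z-z^2)^2 - ((1-z)^3*(1+z)) * (2*(1+z-z^2)*(1-2*z))) /
      ((1+z-z^2)^2 * (1+z-z^2)^2)) (at z)"
    unfolding e by (rule DERIV_divide[OF dN dQ]) (use q in simp)
  have key: "(- ((1-z)^2*(2+4*z))) * (1+z-z^2) - ((1-z)^3*(1+z)) * (2*(1-2*z)) = - ((1-z)^2*(4+2*z))"
    by (simp add: algebra_simps power2_eq_square power3_eq_cube)
  have "((- ((1-z)^2*(2+4*z))) * (1+z-z^2)^2 - ((1-z)^3*(1+z)) * (2*(1+z-z^2)*(1-2*z))) /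
      ((1+z-z^2)^2 * (1+z-z^2)^2)
      = (((- ((1-z)^2*(2+4*z))) * (1+z-z^2) - ((1-z)^3*(1+z)) * (2*(1-2*z))) * (1+z-z^2)) /
      ((1+z-z^2)^3 * (1+z-z^2))"
    by (simp add: algebra_simps power2_eq_square power3_eq_cube)
  also have "... = ((- ((1-z)^2*(4+2*z))) * (1+z-z^2)) / ((1+z-z^2)^3 * (1+z-z^2))" unfolding key ..
  also have "... = - ((1 - z)^2 * (4 + 2 * z) / (qq z)^3)" using q unfolding qq_def by simp
  finally show ?thesis using d by simp
qed


lemma qq_pos: "z0 < x \<Longrightarrow> x \<le> 1 \<Longrightarrow> qq x > 0"
  using basics(1)[of x] by (cases "x = 1") (auto simp: qq_def)

lemma TT_dec:
  assumes "z0 < a" "a < b" "b \<le> 1"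
  shows "TT b < TT a"
proof (rule DERIV_neg_imp_decreasing_open[OF assms(2)])
  fix x assume x: "a < x" "x < b"
  have q: "qq x > 0" using qq_pos[of x] x assms by simp
  have "(1 - x)^2 * (4 + 2 * x) / (qq x)^3 > 0" using q x assms z0_bounds by simp
  then show "\<exists>y. (TT has_real_derivative y) (at x) \<and> y < 0"
    using TT_deriv[of x] q by (intro exI[of _ "- ((1 - x)^2 * (4 + 2 * x) / (qq x)^3)"]) auto
next
  show "continuous_on {a..b} TT"
  proof (rule continuous_at_imp_continuous_on, rule ballI)
    fix x assume "x \<in> {a..b}"
    then have "qq x > 0" using qq_pos[of x] assms by simp
    then show "isCont TT x" using TT_deriv[of x] DERIV_isCont by auto
  qed
qed

lemma TT_le_iff:
  assumes "z0 < a" "a \<le> 1" "z0 < b" "b \<le> 1"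
  shows "TT a < TT b \<longleftrightarrow> b < a"
proof
  assume h: "TT a < TT b"
  show "b < a"
  proof (rule ccontr)
    assume "\<not> b < a"
    then have "a = b \<or> a < b" by linarith
    then show False
    proof
      assume "a = b" then show False using h by simp
    next
      assume "a < b" then have "TT b < TT a" using TT_dec[of a b] assms by simp
      then show False using h by simp
    qed
  qed
next
  assume "b < a" then show "TT a < TT b" using TT_dec[of b a] assms by simp
qed

definition zof :: "real \<Rightarrow> real" where
  "zof t = (THE z. z0 < z \<and> z < 1 \<and> TT z = t)"

lemma zof:
  assumes "t > 0"
  shows "z0 < zof t" "zof t < 1" "TT (zof t) = t"
proof -
  obtain z where z: "z0 < z" "z < 1" "TT z = t" using TT_exists[OF assms] by blast
  have "\<And>w. z0 < w \<and> w < 1 \<and> TT w = t \<Longrightarrow> w = z"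
  proof -
    fix w assume w: "z0 < w \<and> w < 1 \<and> TT w = t"
    have w1: "z0 < w" "w \<le> 1" "TT w = t" using w by auto
    have z1: "z0 < z" "z \<le> 1" using z by auto
    have "\<not> w < z"
    proof
      assume "w < z" then have "TT z < TT w" using TT_dec[of w z] w1 z1 by simp
      then show False using w1 z by simp
    qed
    moreover have "\<not> z < w"
    proof
      assume "z < w" then have "TT w < TT z" using TT_dec[of z w] w1 z1 by simp
      then show False using w1 z by simp
    qed
    ultimately show "w = z" by linarith
  qed
  then have "zof t = z" unfolding zof_def using z by (intro the_equality) blast+
  then show "z0 < zof t" "zof t < 1" "TT (zof t) = t" using z by auto
qed

lemma adagger1:
  assumes "t > 0"
  shows "adagger 1 1 t = xs (zof t)" "\<exists>!a. is_max_E1 1 1 t a"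
proof -
  note Z = zof[OF assms]
  have ch: "\<And>a. is_max_E1 1 1 t a \<longleftrightarrow> a = xs (zof t)" using max_char[OF Z(1,2) Z(3)[symmetric]] .
  then have u: "\<exists>!a. is_max_E1 1 1 t a" by (intro ex1I[of _ "xs (zof t)"]) blast+
  show "\<exists>!a. is_max_E1 1 1 t a" by (rule u)
  show "adagger 1 1 t = xs (zof t)" unfolding adagger_def using ch by blast
qed




definition cc :: "real \<Rightarrow> real" where "cc z = 2*z^3 + 2*z^2 - 2*z - 1"

lemma xs_deriv:
  assumes "1 + z \<noteq> 0"
  shows "(xs has_real_derivative (- (2 * cc z / (1 + z)^2))) (at z)"
proof -
  have e: "xs = (\<lambda>w. (2*(w + w^2 - w^3)) / (1 + w))"
    by (rule ext) (simp add: xs_def mm_def qq_def algebra_simps power2_eq_square power3_eq_cube)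
  have dN: "((\<lambda>w. 2*(w + w^2 - w^3)) has_real_derivative (2*(1 + 2*z - 3*z^2))) (at z)"
    by (rule DERIV_cong, (rule derivative_eq_intros refl)+) (simp add: algebra_simps power2_eq_square)
  have dD: "((\<lambda>w. 1 + w) has_real_derivative 1) (at z)"
    by (rule DERIV_cong, (rule derivative_eq_intros refl)+) simp
  have d: "(xs has_real_derivative
      ((2*(1 + 2*z - 3*z^2)) * (1 + z) - (2*(z + z^2 - z^3)) * 1) / ((1 + z) * (1 + z))) (at z)"
    unfolding e by (rule DERIV_divide[OF dN dD]) (use assms in simp)
  have "(2*(1 + 2*z - 3*z^2)) * (1 + z) - (2*(z + z^2 - z^3)) * 1 = - (2 * cc z)"
    unfolding cc_def by (simp add: algebra_simps power2_eq_square power3_eq_cube)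
  then show ?thesis using d by (simp add: power2_eq_square)
qed

lemma xs_cont: "1 + z \<noteq> 0 \<Longrightarrow> isCont xs z"
  using xs_deriv DERIV_isCont by blast

definition r2 :: real where "r2 = (SOME r. -1/2 < r \<and> r < -2/5 \<and> cc r = 0)"
definition r3 :: real where "r3 = (SOME r. 4/5 < r \<and> r < 9/10 \<and> cc r = 0)"

lemma r2: "-1/2 < r2 \<and> r2 < -2/5 \<and> cc r2 = 0"
proof -
  have c: "continuous_on {-1/2..-2/5} cc" unfolding cc_def by (intro continuous_intros)
  have "cc (-2/5) \<le> 0" "0 \<le> cc (-1/2)" unfolding cc_def by (simp_all add: power3_eq_cube power2_eq_square)
  then obtain x where x: "-1/2 \<le> x" "x \<le> -2/5" "cc x = 0" using IVT2'[OF _ _ _ c] by force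
  have "x \<noteq> -1/2" "x \<noteq> -2/5" using x(3) unfolding cc_def by (auto simp: power3_eq_cube power2_eq_square)
  then have "-1/2 < x \<and> x < -2/5 \<and> cc x = 0" using x by auto
  then show ?thesis unfolding r2_def by (rule someI)
qed

lemma r3: "4/5 < r3 \<and> r3 < 9/10 \<and> cc r3 = 0"
proof -
  have c: "continuous_on {4/5..9/10} cc" unfolding cc_def by (intro continuous_intros)
  have "cc (4/5) \<le> 0" "0 \<le> cc (9/10)" unfolding cc_def by (simp_all add: power3_eq_cube power2_eq_square)
  then obtain x where x: "4/5 \<le> x" "x \<le> 9/10" "cc x = 0" using IVT'[OF _ _ _ c] by force
  have "cc (4/5) \<noteq> 0" "cc (9/10) \<noteq> 0" unfolding cc_def by (simp_all add: power3_eq_cube power2_eq_square)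
  then have "x \<noteq> 4/5" "x \<noteq> 9/10" using x(3) by (metis, metis)
  then have "4/5 < x \<and> x < 9/10 \<and> cc x = 0" using x by auto
  then show ?thesis unfolding r3_def by (rule someI)
qed

lemma cc_factor: "cc z = (z - r2) * (z - r3) * (2*z + 2*r2 + 2*r3 + 2)"
proof -
  have a: "2*r2^3 + 2*r2^2 - 2*r2 - 1 = 0" using r2 unfolding cc_def by simp
  have b: "2*r3^3 + 2*r3^2 - 2*r3 - 1 = 0" using r3 unfolding cc_def by simp
  have "(r2 - r3) * (2 * (r2^2 + r2*r3 + r3^2 + r2 + r3 - 1)) = 0"
    using a b by (simp add: algebra_simps power2_eq_square power3_eq_cube)
  moreover have "r2 \<noteq> r3" using r2 r3 by auto
  ultimately have h: "r2^2 + r2*r3 + r3^2 + r2 + r3 - 1 = 0" by simp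
  show ?thesis unfolding cc_def using a h by algebra
qed

lemma cc_pos_hi: "r3 < x \<Longrightarrow> cc x > 0"
  unfolding cc_factor using r2 r3 by (intro mult_pos_pos) auto

lemma cc_neg_mid: "r2 < x \<Longrightarrow> x < r3 \<Longrightarrow> cc x < 0"
proof -
  assume x: "r2 < x" "x < r3"
  have "(x - r2) * (2*x + 2*r2 + 2*r3 + 2) > 0" using x r2 r3 by (intro mult_pos_pos) auto
  then have "(x - r2) * (2*x + 2*r2 + 2*r3 + 2) * (x - r3) < 0" using x by (simp add: mult_pos_neg)
  then show ?thesis unfolding cc_factor by (simp add: ac_simps)
qed

lemma cc_pos_lo: "z0 < x \<Longrightarrow> x < r2 \<Longrightarrow> cc x > 0"
proof -
  assume x: "z0 < x" "x < r2"
  have "(x - r2) * (x - r3) > 0" using x r2 r3 by (intro mult_neg_neg) auto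
  moreover have "2*x + 2*r2 + 2*r3 + 2 > 0" using x r2 r3 z0_bounds by auto
  ultimately show ?thesis unfolding cc_factor by simp
qed

lemma z0_r2: "z0 < r2" using z0_bounds r2 by auto

lemma xs_cont_on: "z0 < a \<Longrightarrow> continuous_on {a..b} xs"
  by (rule continuous_at_imp_continuous_on) (use z0_bounds in \<open>auto intro!: xs_cont\<close>)

lemma xs_dec_hi:
  assumes "r3 \<le> a" "a < b"
  shows "xs b < xs a"
proof (rule DERIV_neg_imp_decreasing_open[OF assms(2)])
  fix x assume x: "a < x" "x < b"
  have "1 + x > 0" using x assms r3 by auto
  moreover have "cc x > 0" using cc_pos_hi x assms by auto
  ultimately show "\<exists>y. (xs has_real_derivative y) (at x) \<and> y < 0"
    using xs_deriv[of x] by (intro exI[of _ "- (2 * cc x / (1 + x)^2)"]) auto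
next
  show "continuous_on {a..b} xs" using assms r3 z0_bounds by (intro xs_cont_on) auto
qed

lemma xs_inc_mid:
  assumes "r2 \<le> a" "a < b" "b \<le> r3"
  shows "xs a < xs b"
proof (rule DERIV_pos_imp_increasing_open[OF assms(2)])
  fix x assume x: "a < x" "x < b"
  have "1 + x > 0" using x assms r2 by auto
  moreover have "cc x < 0" using cc_neg_mid x assms by auto
  ultimately show "\<exists>y. (xs has_real_derivative y) (at x) \<and> y > 0"
    using xs_deriv[of x] by (intro exI[of _ "- (2 * cc x / (1 + x)^2)"]) (auto simp: divide_neg_pos)
next
  show "continuous_on {a..b} xs" using assms r2 z0_bounds by (intro xs_cont_on) auto
qed

lemma xs_dec_lo:
  assumes "z0 < a" "a < b" "b \<le> r2"
  shows "xs b < xs a"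
proof (rule DERIV_neg_imp_decreasing_open[OF assms(2)])
  fix x assume x: "a < x" "x < b"
  have "1 + x > 0" using x assms z0_bounds by auto
  moreover have "cc x > 0" using cc_pos_lo x assms by auto
  ultimately show "\<exists>y. (xs has_real_derivative y) (at x) \<and> y < 0"
    using xs_deriv[of x] by (intro exI[of _ "- (2 * cc x / (1 + x)^2)"]) auto
next
  show "continuous_on {a..b} xs" using assms by (intro xs_cont_on) auto
qed




lemma zof_iff1:
  assumes "t > 0" "z0 < y" "y \<le> 1"
  shows "y < zof t \<longleftrightarrow> t < TT y"
  using TT_le_iff[of "zof t" y] zof[OF assms(1)] assms by simp

lemma zof_iff2:
  assumes "t > 0" "z0 < y" "y \<le> 1"
  shows "zof t < y \<longleftrightarrow> TT y < t"
  using TT_le_iff[of y "zof t"] zof[OF assms(1)] assms by simp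

lemma zof_order:
  assumes "0 < t1" "t1 < t2"
  shows "zof t2 < zof t1"
  using TT_le_iff[of "zof t1" "zof t2"] zof[OF assms(1)] zof[of t2] assms by simp

lemma r3_props: "z0 < r3" "r3 \<le> 1" "r2 \<le> 1" using r3 r2 z0_r2 by auto

lemma g_mono1: "strict_mono_on {0<..<TT r3} (adagger 1 1)"
proof (rule monotone_onI)
  fix t1 t2 assume t: "t1 \<in> {0<..<TT r3}" "t2 \<in> {0<..<TT r3}" "t1 < t2"
  have z: "zof t2 < zof t1" using zof_order t by auto
  have "r3 < zof t2" using zof_iff1[of t2 r3] r3_props t by auto
  then have "xs (zof t1) < xs (zof t2)" using xs_dec_hi z by auto
  then show "adagger 1 1 t1 < adagger 1 1 t2" using adagger1(1) t by auto
qed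

lemma g_anti: "strict_antimono_on {TT r3<..<TT r2} (adagger 1 1)"
proof (rule monotone_onI)
  have p: "TT r3 > 0" using basics(4)[of r3] r3_props r3 by auto
  fix t1 t2 assume t: "t1 \<in> {TT r3<..<TT r2}" "t2 \<in> {TT r3<..<TT r2}" "t1 < t2"
  have z: "zof t2 < zof t1" using zof_order t p by auto
  have "zof t1 < r3" using zof_iff2[of t1 r3] r3_props t p by auto
  moreover have "r2 < zof t2" using zof_iff1[of t2 r2] r3_props z0_r2 t p by auto
  ultimately have "xs (zof t2) < xs (zof t1)" using xs_inc_mid z by auto
  then show "adagger 1 1 t2 < adagger 1 1 t1" using adagger1(1) t p by auto
qed

lemma g_mono2: "strict_mono_on {TT r2<..} (adagger 1 1)"
proof (rule monotone_onI)
  have p: "TT r2 > 0" using basics(4)[of r2] z0_r2 r2 by auto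
  fix t1 t2 assume t: "t1 \<in> {TT r2<..}" "t2 \<in> {TT r2<..}" "t1 < t2"
  have z: "zof t2 < zof t1" using zof_order t p by auto
  have "zof t1 < r2" using zof_iff2[of t1 r2] r3_props z0_r2 t p by auto
  moreover have "z0 < zof t2" using zof t p by auto
  ultimately have "xs (zof t1) < xs (zof t2)" using xs_dec_lo z by auto
  then show "adagger 1 1 t1 < adagger 1 1 t2" using adagger1(1) t p by auto
qed

lemma TT0: "TT 0 = 1" unfolding TT_def qq_def by simp

lemma thresholds: "0 < TT r3" "TT r3 < 1" "1 < TT r2"
proof -
  show "0 < TT r3" using basics(4)[of r3] r3_props r3 by auto
  show "TT r3 < 1" using TT_dec[of 0 r3] r3 z0_bounds TT0 by auto
  show "1 < TT r2" using TT_dec[of r2 0] r2 z0_r2 TT0 by auto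
qed

lemma E1_scale:
  fixes b \<Delta> s a :: real
  assumes b: "b > 0" and d: "\<Delta> > 0"
  shows "E1 b \<Delta> s a = \<Delta> / b * E1 1 1 (s / \<Delta>^2) (a * \<Delta> / b^2)"
proof (cases "a = 0")
  case True
  then show ?thesis unfolding E1_def using b by simp
next
  case False
  define x where "x = a * \<Delta> / b^2"
  define W where "W = (b^2 - \<Delta> * a)^2 + s * a^2"
  define Y where "Y = (b^2 - \<Delta> * a + sqrt W) / 2"
  have x0: "x \<noteq> 0" unfolding x_def using False b d by simp
  have u: "1 - x = (b^2 - \<Delta> * a) / b^2" unfolding x_def using b by (simp add: field_simps)
  have w: "(1 - x)^2 + (s / \<Delta>^2) * x^2 = W / (b^2)^2" unfolding u W_def x_def using b d
    by (simp add: field_simps power2_eq_square)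
  have bb: "sqrt ((b^2)^2) = b^2" unfolding real_sqrt_abs by simp
  have sw: "sqrt ((1 - x)^2 + (s / \<Delta>^2) * x^2) = sqrt W / b^2"
    unfolding w real_sqrt_divide bb ..
  have y: "(1 - x + sqrt ((1 - x)^2 + (s / \<Delta>^2) * x^2)) / 2 = Y / b^2"
    unfolding sw unfolding u Y_def using b by (simp add: field_simps)
  have sy: "sqrt ((1 - x + sqrt ((1 - x)^2 + (s / \<Delta>^2) * x^2)) / 2) = sqrt Y / b"
    unfolding y real_sqrt_divide using b by simp
  have "E1 1 1 (s / \<Delta>^2) x = (1 - sqrt Y / b) / x"
    unfolding E11 using x0 sy by simp
  also have "... = b / \<Delta> * ((b - sqrt Y) / a)" unfolding x_def using b d False
    by (simp add: field_simps power2_eq_square)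
  finally have "\<Delta> / b * E1 1 1 (s / \<Delta>^2) x = (b - sqrt Y) / a" using b d by simp
  moreover have "E1 b \<Delta> s a = (b - sqrt Y) / a" unfolding E1_def Y_def W_def using False by simp
  ultimately show ?thesis unfolding x_def by simp
qed

lemma ismax_scale:
  fixes b \<Delta> s a :: real
  assumes b: "b > 0" and d: "\<Delta> > 0" and s: "s > 0"
  shows "is_max_E1 b \<Delta> s a \<longleftrightarrow> is_max_E1 1 1 (s / \<Delta>^2) (a * \<Delta> / b^2)"
proof -
  have c: "a' < 4 * b^2 * \<Delta> / s \<longleftrightarrow> a' * \<Delta> / b^2 < 4 * 1^2 * 1 / (s / \<Delta>^2)" for a'
  proof -
    have "a' * (\<Delta> * s) < 4 * (\<Delta>^2 * b^2) \<longleftrightarrow> a' * s < \<Delta> * (4 * b^2)"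
      using mult_less_cancel_left_pos[of "\<Delta>" "a' * s" "\<Delta> * (4 * b^2)"] d by (simp add: algebra_simps power2_eq_square)
    then show ?thesis using b d s by (simp add: field_simps)
  qed
  have e: "\<And>a'. E1 b \<Delta> s a' \<le> E1 b \<Delta> s a \<longleftrightarrow>
      E1 1 1 (s / \<Delta>^2) (a' * \<Delta> / b^2) \<le> E1 1 1 (s / \<Delta>^2) (a * \<Delta> / b^2)"
    unfolding E1_scale[OF b d] using b d by (simp add: divide_le_cancel mult_le_cancel_left_pos)
  have inv: "\<And>x'. x' = (x' * b^2 / \<Delta>) * \<Delta> / b^2" using b d by simp
  show ?thesis
  proof
    assume h: "is_max_E1 b \<Delta> s a"
    show "is_max_E1 1 1 (s / \<Delta>^2) (a * \<Delta> / b^2)" unfolding is_max_E1_def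
    proof (intro conjI allI impI)
      show "a * \<Delta> / b^2 < 4 * 1^2 * 1 / (s / \<Delta>^2)" using h c unfolding is_max_E1_def by blast
      fix x' assume "x' < 4 * 1^2 * 1 / (s / \<Delta>^2)"
      then have "(x' * b^2 / \<Delta>) < 4 * b^2 * \<Delta> / s" using c inv by metis
      then have "E1 b \<Delta> s (x' * b^2 / \<Delta>) \<le> E1 b \<Delta> s a" using h unfolding is_max_E1_def by blast
      then show "E1 1 1 (s / \<Delta>^2) x' \<le> E1 1 1 (s / \<Delta>^2) (a * \<Delta> / b^2)" using e inv by metis
    qed
  next
    assume h: "is_max_E1 1 1 (s / \<Delta>^2) (a * \<Delta> / b^2)"
    show "is_max_E1 b \<Delta> s a" unfolding is_max_E1_def
    proof (intro conjI allI impI)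
      show "a < 4 * b^2 * \<Delta> / s" using h c unfolding is_max_E1_def by blast
      fix a' assume "a' < 4 * b^2 * \<Delta> / s"
      then show "E1 b \<Delta> s a' \<le> E1 b \<Delta> s a" using h c e unfolding is_max_E1_def by blast
    qed
  qed
qed

lemma adagger_scale:
  fixes b \<Delta> s :: real
  assumes b: "b > 0" and d: "\<Delta> > 0" and s: "s > 0"
  shows "adagger b \<Delta> s = b^2 / \<Delta> * adagger 1 1 (s / \<Delta>^2)" "\<exists>!a. is_max_E1 b \<Delta> s a"
proof -
  have t: "s / \<Delta>^2 > 0" using s d by simp
  have ch: "\<And>a. is_max_E1 b \<Delta> s a \<longleftrightarrow> a = b^2 / \<Delta> * adagger 1 1 (s / \<Delta>^2)"
  proof -
    fix a
    have "is_max_E1 b \<Delta> s a \<longleftrightarrow> a * \<Delta> / b^2 = adagger 1 1 (s / \<Delta>^2)"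
      unfolding ismax_scale[OF b d s] adagger1(1)[OF t]
      using max_char[OF zof(1,2)[OF t] zof(3)[OF t, symmetric]] by simp
    also have "... \<longleftrightarrow> a = b^2 / \<Delta> * adagger 1 1 (s / \<Delta>^2)" using b d by (auto simp: field_simps)
    finally show "is_max_E1 b \<Delta> s a \<longleftrightarrow> a = b^2 / \<Delta> * adagger 1 1 (s / \<Delta>^2)" .
  qed
  show "\<exists>!a. is_max_E1 b \<Delta> s a" by (intro ex1I[of _ "b^2 / \<Delta> * adagger 1 1 (s / \<Delta>^2)"]) (auto simp: ch)
  show "adagger b \<Delta> s = b^2 / \<Delta> * adagger 1 1 (s / \<Delta>^2)" unfolding adagger_def ch by simp
qed




lemma ev01: "eventually (\<lambda>t::real. t \<in> {0<..<1}) (at_right 0)"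
  by (rule eventually_at_right_real) simp

lemma zof_lim0: "(zof \<longlongrightarrow> 1) (at_right 0)"
proof (rule order_tendstoI)
  fix y :: real assume y: "y < 1"
  define y' where "y' = max y 0"
  have y': "z0 < y'" "y' < 1" "y \<le> y'" unfolding y'_def using y z0_bounds by auto
  have p: "TT y' > 0" using basics(4)[OF y'(1,2)] .
  show "\<forall>\<^sub>F t in at_right 0. y < zof t"
    using eventually_at_right_real[OF p]
  proof (rule eventually_mono)
    fix t assume "t \<in> {0<..<TT y'}"
    then have "y' < zof t" using zof_iff1[of t y'] y' by auto
    then show "y < zof t" using y' by linarith
  qed
next
  fix y :: real assume y: "1 < y"
  show "\<forall>\<^sub>F t in at_right 0. zof t < y"
    using ev01
  proof (rule eventually_mono)
    fix t assume "t \<in> {0<..<(1::real)}"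
    then show "zof t < y" using zof(2)[of t] y by auto
  qed
qed

lemma xs1: "xs 1 = 1" unfolding xs_def mm_def qq_def by simp

lemma g_lim0: "(adagger 1 1 \<longlongrightarrow> 1) (at_right 0)"
proof -
  have "((\<lambda>t. xs (zof t)) \<longlongrightarrow> xs 1) (at_right 0)"
    by (rule isCont_tendsto_compose[OF xs_cont zof_lim0]) simp
  then have l: "((\<lambda>t. xs (zof t)) \<longlongrightarrow> 1) (at_right 0)" unfolding xs1 .
  have "\<forall>\<^sub>F t in at_right 0. xs (zof t) = adagger 1 1 t"
    using ev01
    by (rule eventually_mono) (auto simp: adagger1(1))
  then show ?thesis using l by (rule tendsto_cong[THEN iffD1])
qed

lemma zof_limtop: "(zof \<longlongrightarrow> z0) at_top"
proof (rule order_tendstoI)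
  fix y :: real assume y: "y < z0"
  show "\<forall>\<^sub>F t in at_top. y < zof t"
    using eventually_gt_at_top[of "0::real"]
  proof (rule eventually_mono)
    fix t :: real assume "0 < t"
    then show "y < zof t" using zof(1)[of t] y by auto
  qed
next
  fix y :: real assume y: "z0 < y"
  define y' where "y' = min y 0"
  have y': "z0 < y'" "y' \<le> 1" "y' \<le> y" unfolding y'_def using y z0_bounds by auto
  show "\<forall>\<^sub>F t in at_top. zof t < y"
    using eventually_gt_at_top[of "max 0 (TT y')"]
  proof (rule eventually_mono)
    fix t assume "max 0 (TT y') < t"
    then have "zof t < y'" using zof_iff2[of t y'] y' by auto
    then show "zof t < y" using y' by linarith
  qed
qed

lemma xs_z0: "xs z0 = 0"
proof -
  have "qq z0 = 0" unfolding qq_def z0_def by (simp add: power2_eq_square field_simps)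
  then show ?thesis unfolding xs_def mm_def by simp
qed

lemma g_limtop: "(adagger 1 1 \<longlongrightarrow> 0) at_top"
proof -
  have "((\<lambda>t. xs (zof t)) \<longlongrightarrow> xs z0) at_top"
    by (rule isCont_tendsto_compose[OF xs_cont zof_limtop]) (use z0_bounds in simp)
  then have l: "((\<lambda>t. xs (zof t)) \<longlongrightarrow> 0) at_top" unfolding xs_z0 .
  have "\<forall>\<^sub>F t in at_top. xs (zof t) = adagger 1 1 t"
    using eventually_gt_at_top[of "0::real"]
    by (rule eventually_mono) (auto simp: adagger1(1))
  then show ?thesis using l by (rule tendsto_cong[THEN iffD1])
qed

lemma g_neg: "1 < t \<Longrightarrow> adagger 1 1 t < 0"
proof -
  assume t: "1 < t"
  have "zof t < 0" using zof_iff2[of t 0] t TT0 z0_bounds by auto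
  moreover have "mm (zof t) > 0" using basics(3)[of "zof t"] zof[of t] t by auto
  ultimately have "xs (zof t) < 0" unfolding xs_def by (simp add: mult_neg_pos)
  then show ?thesis using adagger1(1)[of t] t by simp
qed

lemma transfer_mono:
  fixes g A :: "real \<Rightarrow> real"
  assumes "strict_mono_on I g" "\<forall>s\<in>J. s / D \<in> I \<and> A s = c * g (s / D)" "c > 0" "D > 0"
  shows "strict_mono_on J A"
proof (rule monotone_onI)
  fix s s' assume s: "s \<in> J" "s' \<in> J" "s < s'"
  have "s / D < s' / D" using s assms(4) by (simp add: divide_strict_right_mono)
  then have "g (s / D) < g (s' / D)" using assms(1,2) s by (auto dest: monotone_onD)
  then show "A s < A s'" using assms(2,3) s by simp
qed

lemma transfer_anti:
  fixes g A :: "real \<Rightarrow> real"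
  assumes "strict_antimono_on I g" "\<forall>s\<in>J. s / D \<in> I \<and> A s = c * g (s / D)" "c > 0" "D > 0"
  shows "strict_antimono_on J A"
proof (rule monotone_onI)
  fix s s' assume s: "s \<in> J" "s' \<in> J" "s < s'"
  have "s / D < s' / D" using s assms(4) by (simp add: divide_strict_right_mono)
  then have "g (s' / D) < g (s / D)" using assms(1,2) s by (auto dest: monotone_onD)
  then show "A s' < A s" using assms(2,3) s by simp
qed

lemma no_both:
  fixes f :: "real \<Rightarrow> real"
  assumes "l < h" "strict_mono_on S f" "strict_antimono_on T f" "{l<..<h} \<subseteq> S" "{l<..<h} \<subseteq> T"
  shows False
proof -
  define x where "x = l + (h - l) / 3"
  define y where "y = l + 2 * (h - l) / 3"
  have xy: "x \<in> {l<..<h}" "y \<in> {l<..<h}" "x < y" unfolding x_def y_def using assms(1) by (auto simp: field_simps)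
  have "x \<in> S" "y \<in> S" "x \<in> T" "y \<in> T" using xy assms(4,5) by auto
  then have "f x < f y" "f y < f x" using monotone_onD[OF assms(2)] monotone_onD[OF assms(3)] xy(3) by auto
  then show False by simp
qed




theorem theorem7:
  fixes b \<Delta> :: real
  assumes "b > 0" and "\<Delta> > 0"
  shows "(\<forall>s>0. \<exists>!a. is_max_E1 b \<Delta> s a)
    \<and> (\<exists>!(s1, s2). 0 < s1 \<and> s1 < \<Delta>\<^sup>2 \<and> \<Delta>\<^sup>2 < s2
          \<and> strict_mono_on {0<..<s1} (adagger b \<Delta>)
          \<and> strict_antimono_on {s1<..<s2} (adagger b \<Delta>)
          \<and> strict_mono_on {s2<..} (adagger b \<Delta>))
    \<and> (adagger b \<Delta> \<longlongrightarrow> b\<^sup>2 / \<Delta>) (at_right 0)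
    \<and> filterlim (adagger b \<Delta>) (at_left 0) at_top"
proof -
  note b = assms(1) and d = assms(2)
  define c where "c = b^2 / \<Delta>"
  define D where "D = \<Delta>^2"
  have c: "c > 0" unfolding c_def using b d by simp
  have D: "D > 0" unfolding D_def using d by simp
  have A: "\<And>s. s > 0 \<Longrightarrow> adagger b \<Delta> s = c * adagger 1 1 (s / D)"
    unfolding c_def D_def using adagger_scale(1)[OF b d] by simp
  have P1: "\<forall>s>0. \<exists>!a. is_max_E1 b \<Delta> s a" using adagger_scale(2)[OF b d] by blast
  define s1 where "s1 = D * TT r3"
  define s2 where "s2 = D * TT r2"
  have s12: "0 < s1" "s1 < D" "D < s2" unfolding s1_def s2_def using thresholds D by auto
  let ?P = "\<lambda>s1 s2. 0 < s1 \<and> s1 < \<Delta>\<^sup>2 \<and> \<Delta>\<^sup>2 < s2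
          \<and> strict_mono_on {0<..<s1} (adagger b \<Delta>)
          \<and> strict_antimono_on {s1<..<s2} (adagger b \<Delta>)
          \<and> strict_mono_on {s2<..} (adagger b \<Delta>)"
  have m1: "strict_mono_on {0<..<s1} (adagger b \<Delta>)"
  proof (rule transfer_mono[OF g_mono1 _ c D])
    show "\<forall>s\<in>{0<..<s1}. s / D \<in> {0<..<TT r3} \<and> adagger b \<Delta> s = c * adagger 1 1 (s / D)"
      using A D unfolding s1_def by (auto simp: field_simps)
  qed
  have m2: "strict_antimono_on {s1<..<s2} (adagger b \<Delta>)"
  proof (rule transfer_anti[OF g_anti _ c D])
    show "\<forall>s\<in>{s1<..<s2}. s / D \<in> {TT r3<..<TT r2} \<and> adagger b \<Delta> s = c * adagger 1 1 (s / D)"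
      using A D s12 unfolding s1_def s2_def by (auto simp: field_simps)
  qed
  have m3: "strict_mono_on {s2<..} (adagger b \<Delta>)"
  proof (rule transfer_mono[OF g_mono2 _ c D])
    show "\<forall>s\<in>{s2<..}. s / D \<in> {TT r2<..} \<and> adagger b \<Delta> s = c * adagger 1 1 (s / D)"
    proof
      fix s assume s: "s \<in> {s2<..}"
      have "s > 0" using s s12 D by auto
      then show "s / D \<in> {TT r2<..} \<and> adagger b \<Delta> s = c * adagger 1 1 (s / D)"
        using A D s unfolding s2_def by (auto simp: field_simps)
    qed
  qed
  have Pours: "?P s1 s2" using s12 m1 m2 m3 unfolding D_def by simp
  have uniq: "x1 = s1 \<and> x2 = s2" if h: "?P x1 x2" for x1 x2
  proof -
    have x1: "x1 = s1"
    proof (rule ccontr)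
      assume "x1 \<noteq> s1"
      then consider "x1 < s1" | "s1 < x1" by linarith
      then show False
      proof cases
        case 1
        show False
          by (rule no_both[of x1 "min s1 x2" "{0<..<s1}" "adagger b \<Delta>" "{x1<..<x2}"])
            (use 1 h s12 m1 in \<open>auto simp: D_def\<close>)
      next
        case 2
        show False
          by (rule no_both[of s1 "min x1 s2" "{0<..<x1}" "adagger b \<Delta>" "{s1<..<s2}"])
            (use 2 h s12 m2 in \<open>auto simp: D_def\<close>)
      qed
    qed
    have x2: "x2 = s2"
    proof (rule ccontr)
      assume "x2 \<noteq> s2"
      then consider "x2 < s2" | "s2 < x2" by linarith
      then show False
      proof cases
        case 1
        show False
          by (rule no_both[of x2 s2 "{x2<..}" "adagger b \<Delta>" "{s1<..<s2}"])
            (use 1 h s12 m2 in \<open>auto simp: D_def\<close>)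
      next
        case 2
        show False
          by (rule no_both[of s2 x2 "{s2<..}" "adagger b \<Delta>" "{x1<..<x2}"])
            (use 2 h s12 m3 x1 in \<open>auto simp: D_def\<close>)
      qed
    qed
    show ?thesis using x1 x2 by simp
  qed
  have P2: "\<exists>!(s1, s2). ?P s1 s2"
  proof (rule ex1I[of _ "(s1, s2)"])
    show "case (s1, s2) of (s1, s2) \<Rightarrow> ?P s1 s2" using Pours by simp
  next
    fix y assume "case y of (s1, s2) \<Rightarrow> ?P s1 s2"
    then show "y = (s1, s2)" using uniq by (cases y) auto
  qed
  have P3: "(adagger b \<Delta> \<longlongrightarrow> b\<^sup>2 / \<Delta>) (at_right 0)"
  proof -
    have lim: "((\<lambda>s. s / D) \<longlongrightarrow> 0) (at_right 0)"
      by (rule tendsto_eq_intros refl)+ (use D in simp_all)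
    have "filterlim (\<lambda>s. s / D) (at_right 0) (at_right 0)"
      using lim by (rule tendsto_imp_filterlim_at_right)
        (use ev01 in \<open>rule eventually_mono\<close>, use D in simp)
    then have "((\<lambda>s. adagger 1 1 (s / D)) \<longlongrightarrow> 1) (at_right 0)"
      by (rule filterlim_compose[OF g_lim0])
    then have "((\<lambda>s. c * adagger 1 1 (s / D)) \<longlongrightarrow> c * 1) (at_right 0)"
      by (rule tendsto_mult_left)
    moreover have "\<forall>\<^sub>F s in at_right 0. c * adagger 1 1 (s / D) = adagger b \<Delta> s"
      using ev01 by (rule eventually_mono) (auto simp: A)
    ultimately show ?thesis unfolding c_def by (simp add: tendsto_cong)
  qed
  have P4: "filterlim (adagger b \<Delta>) (at_left 0) at_top"
  proof -
    have "filterlim (\<lambda>s. (1 / D) * s) at_top at_top"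
      by (rule filterlim_tendsto_pos_mult_at_top[OF tendsto_const _ filterlim_ident]) (use D in simp)
    then have f: "filterlim (\<lambda>s. s / D) at_top at_top" by simp
    have "((\<lambda>s. adagger 1 1 (s / D)) \<longlongrightarrow> 0) at_top"
      by (rule filterlim_compose[OF g_limtop f])
    then have "((\<lambda>s. c * adagger 1 1 (s / D)) \<longlongrightarrow> c * 0) at_top"
      by (rule tendsto_mult_left)
    moreover have "\<forall>\<^sub>F s in at_top. c * adagger 1 1 (s / D) = adagger b \<Delta> s"
      using eventually_gt_at_top[of "0::real"] by (rule eventually_mono) (auto simp: A)
    ultimately have l: "(adagger b \<Delta> \<longlongrightarrow> 0) at_top" by (simp add: tendsto_cong)
    have "\<forall>\<^sub>F s in at_top. adagger b \<Delta> s < 0"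
      using eventually_gt_at_top[of "D"]
    proof (rule eventually_mono)
      fix s assume s: "D < s"
      then have "1 < s / D" using D by simp
      then have "adagger 1 1 (s / D) < 0" by (rule g_neg)
      then show "adagger b \<Delta> s < 0" using A[of s] s D c by (simp add: mult_pos_neg)
    qed
    then show ?thesis using l by (rule tendsto_imp_filterlim_at_left[rotated])
  qed
  show ?thesis using P1 P2 P3 P4 by blast
qed


end
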